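(* For any $m>0$, $\delta>0$, $R\ge1$, $N>-1$ and $p\ge0$ there is a constant $C>0$ (depending on $R,\delta,p,N,m$ but not on $a,d,x$) such that $$x^{N+1-p}\int_{R/x^2}^{\infty}e^{-\frac{x^{2m}}{2}(1+r^{2m})+ax^d(1+\delta r^d)}\,r^N\,dr\le C(1+a)^{\max\left(0,\frac{N+p+1}{m}-1\right)}e^{\frac{1+\delta^2}{2}a^2}$$ and $$x^{m}\int_{R/x^2}^{\infty}e^{-\frac{x^{2m}}{2}(1-r^{m})^2+ax^d(1-r^d)}\,r^{m/2}\,dr\le C(1+a)e^{\frac{a^2}{2}}$$ for all $x>0$, $a>0$, and $0\le d\le m$. *)

theory Defs
  imports "HOL-Analysis.Analysis"
begin

end

theory Submission
  imports Defs "HOL-Real_Asymp.Real_Asymp"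
begin


lemma E1:
  fixes y K :: real assumes K: "K \<ge> 0"
  shows "exp (-(y\<^sup>2)/2) * (1+y\<^sup>2) * (2*(1+\<bar>y\<bar>)) powr K \<le> 4 * 2 powr K * exp (K\<^sup>2)"
proof -
  have a: "(2*(1+\<bar>y\<bar>)) powr K \<le> 2 powr K * exp (K*\<bar>y\<bar>)"
  proof -
    have "(2*(1+\<bar>y\<bar>)) powr K \<le> (2*exp \<bar>y\<bar>) powr K"
    proof -
      have h: "2*(1+\<bar>y\<bar>) \<le> 2*exp \<bar>y\<bar>" using mult_left_mono[OF exp_ge_add_one_self[of "\<bar>y\<bar>"], of 2] by simp
      show ?thesis using h K by (intro powr_mono2) auto
    qed
    also have "\<dots> = 2 powr K * exp (K*\<bar>y\<bar>)"
      by (simp add: powr_def ln_mult exp_add[symmetric] algebra_simps)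
    finally show ?thesis .
  qed
  have b: "1 + y\<^sup>2 \<le> 4 * exp (y\<^sup>2/4)"
  proof -
    have h: "1 + y\<^sup>2/4 \<le> exp (y\<^sup>2/4)" by (rule exp_ge_add_one_self)
    have "0 \<le> y\<^sup>2" by simp
    then show ?thesis using h by linarith
  qed
  have c: "-(y\<^sup>2)/2 + y\<^sup>2/4 + K*\<bar>y\<bar> \<le> K\<^sup>2"
    using zero_le_power2[of "\<bar>y\<bar>/2 - K"] by (simp add: power2_eq_square algebra_simps abs_mult_self_eq)
  have "exp (-(y\<^sup>2)/2) * (1+y\<^sup>2) * (2*(1+\<bar>y\<bar>)) powr K \<le> exp (-(y\<^sup>2)/2) * (4 * exp (y\<^sup>2/4)) * (2 powr K * exp (K*\<bar>y\<bar>))"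
    by (intro mult_mono a b) auto
  also have "\<dots> = 4 * 2 powr K * (exp (-(y\<^sup>2)/2) * exp (y\<^sup>2/4) * exp (K*\<bar>y\<bar>))"
    by (simp only: mult.assoc mult.commute mult.left_commute)
  also have "\<dots> = 4 * 2 powr K * exp (-(y\<^sup>2)/2 + y\<^sup>2/4 + K*\<bar>y\<bar>)"
    by (simp only: exp_add)
  also have "\<dots> \<le> 4 * 2 powr K * exp (K\<^sup>2)"
    using c by simp
  finally show ?thesis .
qed

lemma E2:
  fixes s b e :: real assumes s: "s \<ge> 1" and b: "b \<ge> 0"
  shows "s powr e \<le> (1+b) powr e * (2*(1+\<bar>s-b\<bar>)) powr \<bar>e\<bar>"
proof (cases "e \<ge> 0")
  case True
  have "(1+b)*(1+\<bar>s-b\<bar>) = 1 + b + \<bar>s-b\<bar> + b*\<bar>s-b\<bar>" by (simp add: algebra_simps)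
  moreover have "0 \<le> b*\<bar>s-b\<bar>" using b by simp
  moreover have "s - b \<le> \<bar>s-b\<bar>" by simp
  ultimately have "s \<le> (1+b)*(1+\<bar>s-b\<bar>)" by linarith
  then have "s powr e \<le> ((1+b)*(1+\<bar>s-b\<bar>)) powr e" using True s by (intro powr_mono2) auto
  also have "\<dots> = (1+b) powr e * (1+\<bar>s-b\<bar>) powr e" using b by (simp add: powr_mult)
  also have "\<dots> \<le> (1+b) powr e * (2*(1+\<bar>s-b\<bar>)) powr \<bar>e\<bar>"
  proof -
    have "(1+\<bar>s-b\<bar>) powr e \<le> (2*(1+\<bar>s-b\<bar>)) powr e" using True by (intro powr_mono2) auto
    then show ?thesis using True b by (simp add: abs_of_nonneg mult_left_mono)
  qed
  finally show ?thesis .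
next
  case False
  have ae: "\<bar>e\<bar> = -e" using False by simp
  show ?thesis
  proof (cases "s \<ge> (1+b)/2")
    case True
    have "s powr e \<le> ((1+b)/2) powr e" using False True b by (intro powr_mono2') auto
    also have "((1+b)/2) powr e = (1+b) powr e / 2 powr e" using b by (simp add: powr_divide)
    also have "\<dots> = (1+b) powr e * 2 powr \<bar>e\<bar>" unfolding ae by (simp add: powr_minus divide_inverse)
    also have "\<dots> \<le> (1+b) powr e * (2*(1+\<bar>s-b\<bar>)) powr \<bar>e\<bar>"
    proof -
      have "2 powr \<bar>e\<bar> \<le> (2*(1+\<bar>s-b\<bar>)) powr \<bar>e\<bar>" by (intro powr_mono2) auto
      then show ?thesis by (intro mult_left_mono) auto
    qed
    finally show ?thesis .
  next
    case F2: False
    have s1: "s powr e \<le> 1" using s False powr_mono[of e 0 s] by simp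
    have le: "1 + b \<le> 2*(1+\<bar>s-b\<bar>)"
    proof -
      obtain z where z: "z = \<bar>s-b\<bar>" by blast
      have "z \<ge> b - s" using z by simp
      then have "1 + b \<le> 2*(1+z)" using F2 s by (simp add: field_simps)
      then show ?thesis using z by simp
    qed
    have "(1+b) powr (-e) \<le> (2*(1+\<bar>s-b\<bar>)) powr \<bar>e\<bar>" unfolding ae
      using False b le by (intro powr_mono2) auto
    then have "(1+b) powr e * (1+b) powr (-e) \<le> (1+b) powr e * (2*(1+\<bar>s-b\<bar>)) powr \<bar>e\<bar>"
      by (intro mult_left_mono) auto
    also have "(1+b) powr e * (1+b) powr (-e) = 1" using b by (simp add: powr_add[symmetric])
    finally show ?thesis using s1 by linarith
  qed
qed

lemma E3:
  fixes w \<gamma> \<kappa> :: real assumes "\<gamma> \<ge> 0" "\<kappa> > 0" "w \<ge> 0"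
  shows "w powr \<gamma> \<le> (max \<gamma> 1 / \<kappa>) powr \<gamma> * exp (\<kappa> * w)"
proof (cases "w = 0 \<or> \<gamma> = 0")
  case True
  then show ?thesis using assms by (auto simp: powr_def)
next
  case False
  define g where "g = max \<gamma> 1"
  have g: "g \<ge> 1" "g \<ge> \<gamma>" by (auto simp: g_def)
  have w: "w > 0" using False assms by auto
  have "ln (\<kappa>*w/g) \<le> \<kappa>*w/g - 1" using w g assms by (intro ln_le_minus_one) auto
  then have "ln (\<kappa>*w/g) \<le> \<kappa>*w/g" by linarith
  then have "\<gamma> * ln (\<kappa>*w/g) \<le> \<gamma> * (\<kappa>*w/g)" using assms by (intro mult_left_mono) auto
  also have "\<gamma> * (\<kappa>*w/g) \<le> \<kappa> * w" using g assms w
    by (simp add: divide_le_eq)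
  finally have "\<gamma> * ln (\<kappa>*w/g) \<le> \<kappa> * w" .
  then have "(\<kappa>*w/g) powr \<gamma> \<le> exp (\<kappa> * w)" using w g assms by (simp add: powr_def)
  moreover have "(\<kappa>*w/g) powr \<gamma> = (\<kappa>/g) powr \<gamma> * w powr \<gamma>" using w g assms
    by (simp add: powr_mult[symmetric])
  ultimately have "w powr \<gamma> \<le> exp (\<kappa> * w) / (\<kappa>/g) powr \<gamma>" using g assms
    by (simp add: field_simps)
  also have "\<dots> = (g/\<kappa>) powr \<gamma> * exp (\<kappa> * w)" using g assms
    by (simp add: powr_divide field_simps)
  finally show ?thesis by (simp add: g_def)
qed



lemma dpow: fixes x r c :: real assumes "x > 0" "r > 0"
  shows "DERIV (\<lambda>r. (x*r) powr c) r :> c*(x*r) powr (c-1) * x"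
  using assms by (auto intro!: derivative_eq_intros)

lemma dF1c: fixes x r c :: real assumes "x > 0" "r > 0" "c > 0"
  shows "DERIV (\<lambda>r. -1/c * inverse (1+(x*r) powr c)) r :> x*(x*r) powr (c-1)/(1+(x*r) powr c)\<^sup>2"
proof -
  have p: "(x*r) powr c > 0" using assms by simp
  have "DERIV (\<lambda>r. -1/c * inverse (1+(x*r) powr c)) r :> -1/c * (- ((0 + c*(x*r) powr (c-1) * x) * inverse ((1+(x*r) powr c) ^ Suc (Suc 0))))"
    using p assms by (intro DERIV_cmult DERIV_inverse_fun DERIV_add DERIV_const dpow) (auto, smt (verit) p)
  then show ?thesis
    by (rule DERIV_cong) (use assms in \<open>simp add: field_simps power2_eq_square\<close>)
qed

lemma dF1: fixes x r N :: real assumes "x > 0" "r > 0" "N > -1"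
  shows "DERIV (\<lambda>r. -1/(N+1) * inverse (1+(x*r) powr (N+1))) r :> x*(x*r) powr N/(1+(x*r) powr (N+1))\<^sup>2"
  using dF1c[of x r "N+1"] assms by simp

lemma dF2: assumes "x > 0" "r > 0" "m > 0"
  shows "DERIV (\<lambda>r. arctan ((x*r) powr m - b)) r :> m*x*(x*r) powr (m-1)/(1+((x*r) powr m - b)\<^sup>2)"
  using assms
  by (auto intro!: derivative_eq_intros simp: field_simps)


lemma l1: fixes x c :: real assumes "x > 0" "c > 0"
  shows "((\<lambda>r. -1/c * inverse (1+(x*r) powr c)) \<longlongrightarrow> 0) at_top"
  using assms by real_asymp

lemma l2: fixes x m b :: real assumes "x > 0" "m > 0"
  shows "((\<lambda>r. arctan ((x*r) powr m - b)) \<longlongrightarrow> pi/2) at_top"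
  using assms by real_asymp

lemma l3: fixes X m b :: real assumes "X > 0" "m > 0"
  shows "((\<lambda>r. - arctan (X*(1 - r powr m) - b)) \<longlongrightarrow> pi/2) at_top"
  using assms by real_asymp


lemma KEY1:
  fixes s b e :: real assumes s: "s \<ge> 1" and b: "b \<ge> 0"
  shows "exp (-((s-b)\<^sup>2)/2) * s powr e \<le> (4 * 2 powr \<bar>e\<bar> * exp (\<bar>e\<bar>\<^sup>2)) * (1+b) powr e / (1 + (s-b)\<^sup>2)"
proof -
  have "exp (-((s-b)\<^sup>2)/2) * s powr e * (1 + (s-b)\<^sup>2) \<le> exp (-((s-b)\<^sup>2)/2) * ((1+b) powr e * (2*(1+\<bar>s-b\<bar>)) powr \<bar>e\<bar>) * (1 + (s-b)\<^sup>2)"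
    using E2[OF s b, of e] by (intro mult_right_mono mult_left_mono) auto
  also have "\<dots> = (1+b) powr e * (exp (-((s-b)\<^sup>2)/2) * (1 + (s-b)\<^sup>2) * (2*(1+\<bar>s-b\<bar>)) powr \<bar>e\<bar>)"
    by (simp add: algebra_simps)
  also have "\<dots> \<le> (1+b) powr e * (4 * 2 powr \<bar>e\<bar> * exp (\<bar>e\<bar>\<^sup>2))"
    using E1[of "\<bar>e\<bar>" "s-b"] by (intro mult_left_mono) auto
  finally show ?thesis by (simp add: field_simps add_pos_nonneg)
qed

lemma A_bound:
  fixes x a d m :: real assumes "x > 0" "a > 0" "0 \<le> d" "d \<le> m"
  shows "-(x powr (2*m))/2 + a * x powr d \<le> a\<^sup>2/2 + 1/2"
proof (cases "x \<ge> 1")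
  case True
  have "x powr d \<le> x powr m" using True assms by (intro powr_mono) auto
  then have "a * x powr d \<le> a * x powr m" using assms by (intro mult_left_mono) auto
  moreover have "x powr (2*m) = (x powr m)\<^sup>2" using assms by (simp add: powr_powr[symmetric] power2_eq_square powr_add[symmetric])
  moreover have "-(x powr m)\<^sup>2/2 + a * x powr m \<le> a\<^sup>2/2" using zero_le_power2[of "x powr m - a"] by (simp add: power2_eq_square algebra_simps)
  ultimately show ?thesis by linarith
next
  case False
  have "x powr d \<le> 1" using False assms powr_mono2[of d x 1] by simp
  then have "a * x powr d \<le> a" using assms by (simp add: mult_left_le)
  moreover have "a \<le> a\<^sup>2/2 + 1/2" using zero_le_power2[of "a - 1"] by (simp add: power2_eq_square algebra_simps)
  moreover have "x powr (2*m) \<ge> 0" by simp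
  ultimately show ?thesis by linarith
qed


lemma PW1:
  fixes m \<delta> R N p x a d r :: real
  assumes m: "m > 0" and \<delta>: "\<delta> > 0" and R: "R \<ge> 1" and N: "N > -1" and p: "p \<ge> 0"
    and x: "x > 0" and a: "a > 0" and d: "0 \<le> d" "d \<le> m" and r: "r \<ge> R / x\<^sup>2"
  defines "e \<equiv> (N + p + 1) / m - 1"
  defines "k \<equiv> max 0 ((N + p + 1) / m - 1)"
  defines "M \<equiv> 4 * 2 powr \<bar>e\<bar> * exp (\<bar>e\<bar>\<^sup>2)"
  defines "C1 \<equiv> max (4 * exp 1) (exp (1/2) * M / m * max 1 \<delta> powr k)"
  shows "x powr (N + 1 - p) * (exp (- (x powr (2*m) / 2) * (1 + r powr (2*m)) + a * x powr d * (1 + \<delta> * r powr d)) * r powr N)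
     \<le> (C1 * (1 + a) powr k * exp ((1 + \<delta>\<^sup>2) / 2 * a\<^sup>2)) *
        (x*(x*r) powr N/(1+(x*r) powr (N+1))\<^sup>2 + m*x*(x*r) powr (m-1)/(1+((x*r) powr m - a*\<delta>)\<^sup>2))"
proof -
  define t where "t = x * r"
  define b where "b = a * \<delta>"
  define u where "u = t powr m"
  define A where "A = -(x powr (2*m))/2 + a * x powr d"
  define B where "B = -(u\<^sup>2)/2 + b * t powr d"
  define G where "G = exp ((1 + \<delta>\<^sup>2) / 2 * a\<^sup>2)"
  define f1 where "f1 = x*t powr N/(1+t powr (N+1))\<^sup>2"
  define f2 where "f2 = m*x*t powr (m-1)/(1+(u - b)\<^sup>2)"
  have rpos: "r > 0" using r R x by (smt (verit) divide_pos_pos zero_less_power)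
  have tpos: "t > 0" using rpos x by (simp add: t_def)
  have tR: "t \<ge> R / x" using r x by (simp add: t_def field_simps power2_eq_square)
  have b0: "b \<ge> 0" using a \<delta> by (simp add: b_def)
  have f1nn: "f1 \<ge> 0" using x tpos by (simp add: f1_def)
  have f2nn: "f2 \<ge> 0" using x tpos m by (simp add: f2_def)
  have G0: "G > 0" by (simp add: G_def)
  have C1p: "C1 > 0" unfolding C1_def by (simp add: less_max_iff_disj)
  have ak: "(1 + a) powr k \<ge> 1" using a by (simp add: k_def ge_one_powr_ge_zero)
  have expeq: "- (x powr (2*m) / 2) * (1 + r powr (2*m)) + a * x powr d * (1 + \<delta> * r powr d) = A + B"
  proof -
    have "t powr (2*m) = x powr (2*m) * r powr (2*m)" using x rpos by (simp add: t_def powr_mult)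
    moreover have "t powr (2*m) = u\<^sup>2" using tpos by (simp add: u_def power2_eq_square powr_add[symmetric])
    moreover have "t powr d = x powr d * r powr d" using x rpos by (simp add: t_def powr_mult)
    ultimately show ?thesis by (simp add: A_def B_def b_def algebra_simps)
  qed
  have Ab: "A \<le> a\<^sup>2/2 + 1/2" unfolding A_def using A_bound[OF x a d] .
  have Gsplit: "exp (a\<^sup>2/2 + b\<^sup>2/2) = G" by (simp add: G_def b_def power_mult_distrib algebra_simps)
  have xfac: "x powr (N + 1 - p) * r powr N = x powr (-p) * (x * t powr N)"
  proof -
    have "x powr (N + 1 - p) = x powr (-p + 1 + N)" by (simp add: algebra_simps)
    also have "\<dots> = x powr (-p) * x powr 1 * x powr N" by (simp only: powr_add)
    finally show ?thesis using x rpos by (simp add: t_def powr_mult)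
  qed
  have LHS: "x powr (N + 1 - p) * (exp (- (x powr (2*m) / 2) * (1 + r powr (2*m)) + a * x powr d * (1 + \<delta> * r powr d)) * r powr N)
     = x powr (-p) * (x * t powr N) * exp (A + B)"
    unfolding expeq xfac[symmetric] by (simp add: algebra_simps)
  have red: "?thesis = (x powr (-p) * (x * t powr N) * exp (A + B) \<le> (C1 * (1 + a) powr k * G) * (f1 + f2))"
    unfolding LHS by (simp only: G_def f1_def f2_def t_def u_def b_def)
  have main: "x powr (-p) * (x * t powr N) * exp (A + B) \<le> (C1 * (1 + a) powr k * G) * (f1 + f2)"
  proof (cases "t < 1")
    case True
    have x1: "x > 1" using tR True R x by (smt (verit) le_divide_eq_1_pos)
    have xp: "x powr (-p) \<le> 1" using x1 p ge_one_powr_ge_zero[of x p] by (simp add: powr_minus_divide)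
    have Bb: "B \<le> b\<^sup>2/2 + 1/2"
    proof -
      have "t powr d \<le> 1" using True tpos d powr_mono2[of d t 1] by simp
      then have "b * t powr d \<le> b" using b0 by (simp add: mult_left_le)
      moreover have "b \<le> b\<^sup>2/2 + 1/2" using zero_le_power2[of "b - 1"] by (simp add: power2_eq_square algebra_simps)
      moreover have "-(u\<^sup>2)/2 \<le> 0" by simp
      ultimately show ?thesis unfolding B_def by linarith
    qed
    have t1: "t powr (N+1) \<le> 1" using True tpos N powr_mono2[of "N+1" t 1] by simp
    have "x * t powr N \<le> 4 * f1"
    proof -
      have "1 + t powr (N+1) \<le> 2" using t1 by simp
      then have D4: "(1+t powr (N+1))\<^sup>2 \<le> 2\<^sup>2" by (intro power_mono) auto
      have D0: "(1+t powr (N+1))\<^sup>2 > 0" by (intro zero_less_power) (smt (verit) powr_ge_zero)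
      have "x * t powr N / 4 \<le> x * t powr N / (1+t powr (N+1))\<^sup>2"
        using D4 D0 x tpos by (intro divide_left_mono) auto
      then show ?thesis unfolding f1_def by (simp add: algebra_simps)
    qed
    have "x powr (-p) * (x * t powr N) * exp (A + B) \<le> 1 * (4 * f1) * exp (a\<^sup>2/2 + b\<^sup>2/2 + 1)"
    proof -
      have e: "exp (A + B) \<le> exp (a\<^sup>2/2 + b\<^sup>2/2 + 1)" using Ab Bb by simp
      have "x powr (-p) * (x * t powr N) \<le> 1 * (4 * f1)"
        by (rule mult_mono[OF xp \<open>x * t powr N \<le> 4 * f1\<close>]) (use x tpos in auto)
      then show ?thesis by (rule mult_mono[OF _ e]) (use f1nn in auto)
    qed
    also have "\<dots> = (4 * exp 1) * G * f1" using Gsplit by (simp add: exp_add algebra_simps)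
    also have "\<dots> \<le> (C1 * (1 + a) powr k * G) * f1"
    proof -
      have c1: "4 * exp 1 \<le> C1" by (simp add: C1_def)
      have "C1 * 1 \<le> C1 * (1 + a) powr k" using ak c1 by (intro mult_left_mono) (auto intro: order_trans[rotated])
      then have "4 * exp 1 \<le> C1 * (1 + a) powr k" using c1 by linarith
      then show ?thesis using G0 f1nn by (intro mult_right_mono) auto
    qed
    also have "\<dots> \<le> (C1 * (1 + a) powr k * G) * (f1 + f2)"
      using f2nn G0 ak C1p by (intro mult_left_mono) auto
    finally show ?thesis .
  next
    case False
    then have t1: "t \<ge> 1" by simp
    have u1: "u \<ge> 1" using t1 m by (simp add: u_def ge_one_powr_ge_zero)
    have xp: "x powr (-p) \<le> t powr p"
    proof (cases "x \<ge> 1")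
      case True
      then have "x powr (-p) \<le> 1" using p ge_one_powr_ge_zero[of x p] by (simp add: powr_minus_divide)
      also have "1 \<le> t powr p" using t1 p by (simp add: ge_one_powr_ge_zero)
      finally show ?thesis .
    next
      case False
      have "1/x \<le> t" using tR R x by (smt (verit) divide_right_mono)
      then have "(1/x) powr p \<le> t powr p" using x p by (intro powr_mono2) auto
      then show ?thesis using x by (simp add: powr_minus_divide powr_divide)
    qed
    have Bb: "B \<le> b\<^sup>2/2 - (u - b)\<^sup>2/2"
    proof -
      have "t powr d \<le> u" unfolding u_def using t1 d by (intro powr_mono) auto
      then have "b * t powr d \<le> b * u" using b0 by (intro mult_left_mono)
      moreover have "b\<^sup>2/2 - (u - b)\<^sup>2/2 = b*u - u\<^sup>2/2" by (simp add: power2_eq_square field_simps)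
      ultimately show ?thesis unfolding B_def by linarith
    qed
    have tq: "t powr N * t powr p = t powr (m-1) * u powr e"
    proof -
      have me: "(m - 1) + m * e = N + p" using m by (simp add: e_def field_simps)
      have "t powr (m-1) * u powr e = t powr ((m - 1) + m * e)"
        using tpos by (simp add: u_def powr_powr powr_add)
      also have "\<dots> = t powr N * t powr p" by (simp add: me powr_add)
      finally show ?thesis by simp
    qed
    have "x powr (-p) * (x * t powr N) * exp (A + B) \<le> t powr p * (x * t powr N) * exp (a\<^sup>2/2 + 1/2 + (b\<^sup>2/2 - (u - b)\<^sup>2/2))"
    proof -
      have e: "exp (A + B) \<le> exp (a\<^sup>2/2 + 1/2 + (b\<^sup>2/2 - (u - b)\<^sup>2/2))" using Ab Bb by simp
      have "x powr (-p) * (x * t powr N) \<le> t powr p * (x * t powr N)"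
        by (rule mult_right_mono[OF xp]) (use x tpos in auto)
      then show ?thesis by (rule mult_mono[OF _ e]) (use x tpos in auto)
    qed
    also have "\<dots> = exp (1/2) * G * x * t powr (m-1) * (exp (-((u-b)\<^sup>2)/2) * u powr e)"
    proof -
      have "exp (a\<^sup>2/2 + 1/2 + (b\<^sup>2/2 - (u - b)\<^sup>2/2)) = exp (1/2 + (a\<^sup>2/2 + b\<^sup>2/2) + (-((u-b)\<^sup>2)/2))"
        by (rule arg_cong[where f=exp]) simp
      also have "\<dots> = exp (1/2) * G * exp (-((u-b)\<^sup>2)/2)" by (simp only: mult_exp_exp Gsplit[symmetric])
      finally have ex: "exp (a\<^sup>2/2 + 1/2 + (b\<^sup>2/2 - (u - b)\<^sup>2/2)) = exp (1/2) * G * exp (-((u-b)\<^sup>2)/2)" .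
      have "t powr p * (x * t powr N) * (exp (1/2) * G * exp (-((u-b)\<^sup>2)/2)) = exp (1/2) * G * x * exp (-((u-b)\<^sup>2)/2) * (t powr N * t powr p)"
        by (simp only: ac_simps)
      also have "\<dots> = exp (1/2) * G * x * t powr (m-1) * (exp (-((u-b)\<^sup>2)/2) * u powr e)"
        by (simp only: tq ac_simps)
      finally show ?thesis by (simp only: ex)
    qed
    also have "\<dots> \<le> exp (1/2) * G * x * t powr (m-1) * (M * (1+b) powr e / (1 + (u-b)\<^sup>2))"
      using KEY1[OF u1 b0, of e] x tpos G0 by (intro mult_left_mono) (auto simp: M_def)
    also have "\<dots> = (exp (1/2) * M / m * (1+b) powr e) * G * f2"
      using m by (simp add: f2_def field_simps)
    also have "\<dots> \<le> (C1 * (1 + a) powr k) * G * f2"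
    proof -
      have "(1+b) powr e \<le> (1+b) powr k" using b0 by (intro powr_mono) (auto simp: e_def k_def)
      also have "1 + b \<le> max 1 \<delta> * (1 + a)"
      proof -
        have "\<delta> * a \<le> max 1 \<delta> * a" using a by (intro mult_right_mono) auto
        moreover have "1 \<le> max 1 \<delta>" by simp
        ultimately show ?thesis by (simp add: b_def algebra_simps)
      qed
      then have "(1+b) powr k \<le> (max 1 \<delta> * (1 + a)) powr k" using b0 by (intro powr_mono2) (auto simp: k_def)
      also have "\<dots> = max 1 \<delta> powr k * (1 + a) powr k" using a by (simp add: powr_mult)
      finally have "exp (1/2) * M / m * (1+b) powr e \<le> exp (1/2) * M / m * (max 1 \<delta> powr k * (1 + a) powr k)"
        using m by (intro mult_left_mono) (auto simp: M_def)
      also have "\<dots> \<le> C1 * (1 + a) powr k"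
      proof -
        have "exp (1/2) * M / m * max 1 \<delta> powr k \<le> C1" unfolding C1_def by (rule max.cobounded2)
        then have "exp (1/2) * M / m * max 1 \<delta> powr k * (1+a) powr k \<le> C1 * (1+a) powr k"
          by (rule mult_right_mono) simp
        then show ?thesis by (simp add: mult.assoc)
      qed
      finally show ?thesis using G0 f2nn by (intro mult_right_mono) auto
    qed
    also have "\<dots> \<le> (C1 * (1 + a) powr k * G) * (f1 + f2)"
      using f1nn G0 ak C1p by (simp add: mult.assoc) (intro mult_left_mono; auto)
    finally show ?thesis .
  qed
  then show ?thesis using red by blast
qed
lemma tool:
  fixes g f F :: "real \<Rightarrow> real"
  assumes fm: "f \<in> borel_measurable borel"
    and fd: "\<And>r. L \<le> r \<Longrightarrow> DERIV F r :> f r" and fnn: "\<And>r. L \<le> r \<Longrightarrow> 0 \<le> f r"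
    and lim: "(F \<longlongrightarrow> T) at_top"
    and gle: "\<And>r. L \<le> r \<Longrightarrow> c * g r \<le> K * f r" and gnn: "\<And>r. L \<le> r \<Longrightarrow> 0 \<le> g r"
    and c: "c > 0" and K: "K \<ge> 0"
  shows "ennreal c * (\<integral>\<^sup>+r\<in>{L..}. ennreal (g r) \<partial>lborel) \<le> ennreal K * ennreal (T - F L)"
proof -
  have "(\<integral>\<^sup>+r\<in>{L..}. ennreal (g r) \<partial>lborel) \<le> (\<integral>\<^sup>+r. ennreal (K/c) * (ennreal (f r) * indicator {L..} r) \<partial>lborel)"
  proof (rule nn_integral_mono)
    fix r
    show "ennreal (g r) * indicator {L..} r \<le> ennreal (K/c) * (ennreal (f r) * indicator {L..} r)"
    proof (cases "L \<le> r")
      case True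
      have "g r \<le> K / c * f r" using gle[OF True] c by (simp add: field_simps)
      then show ?thesis using True fnn[OF True] K c
        by (simp add: ennreal_mult[symmetric] ennreal_leI)
    qed simp
  qed
  also have "\<dots> = ennreal (K/c) * (\<integral>\<^sup>+r. ennreal (f r) * indicator {L..} r \<partial>lborel)"
    by (rule nn_integral_cmult) (use fm in measurable)
  also have "(\<integral>\<^sup>+r. ennreal (f r) * indicator {L..} r \<partial>lborel) = T - F L"
    by (rule nn_integral_FTC_atLeast[OF fm fd fnn lim])
  finally have "ennreal c * (\<integral>\<^sup>+r\<in>{L..}. ennreal (g r) \<partial>lborel) \<le> ennreal c * (ennreal (K/c) * ennreal (T - F L))"
    by (rule mult_left_mono) simp
  also have "\<dots> = ennreal K * ennreal (T - F L)"
    using c K by (simp add: mult.assoc[symmetric] ennreal_mult[symmetric])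
  finally show ?thesis .
qed

lemma FLtest:
  fixes x L N m a \<delta> :: real
  assumes x: "x > 0" and Lpos: "L > 0" and N1: "N + 1 > 0"
  shows "-1/(N+1) * inverse (1+(x*L) powr (N+1)) + arctan ((x*L) powr m - a*\<delta>) \<ge> -1/(N+1) - pi/2"
proof -
  define y where "y = inverse (1+(x*L) powr (N+1))"
  have z0: "0 \<le> (x*L) powr (N+1)" by simp
  have y1: "y \<le> 1" unfolding y_def using z0 by (simp add: inverse_le_1_iff)
  have c0: "-1/(N+1) \<le> 0" using N1 by simp
  have "-1/(N+1) * 1 \<le> -1/(N+1) * y" by (rule mult_left_mono_neg[OF y1 c0])
  then have h1: "-1/(N+1) \<le> -1/(N+1) * y" by simp
  have h2: "- (pi/2) < arctan ((x*L) powr m - a*\<delta>)" by (rule arctan_lbound)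
  have "-1/(N+1) + - (pi/2) \<le> -1/(N+1) * y + arctan ((x*L) powr m - a*\<delta>)"
    by (rule add_mono[OF h1 less_imp_le[OF h2]])
  then show ?thesis unfolding y_def by simp
qed

lemma INEQ1:
  fixes m \<delta> R N p :: real
  assumes m: "m > 0" and \<delta>: "\<delta> > 0" and R: "R \<ge> 1" and N: "N > -1" and p: "p \<ge> 0"
  shows "\<exists>C>0. \<forall>x a d :: real. x > 0 \<longrightarrow> a > 0 \<longrightarrow> 0 \<le> d \<longrightarrow> d \<le> m \<longrightarrow>
     ennreal (x powr (N + 1 - p)) *
       (\<integral>\<^sup>+ r\<in>{R / x\<^sup>2..}.
          ennreal (exp (- (x powr (2*m) / 2) * (1 + r powr (2*m)) + a * x powr d * (1 + \<delta> * r powr d))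
                   * r powr N) \<partial>lborel)
       \<le> ennreal (C * (1 + a) powr (max 0 ((N + p + 1) / m - 1)) * exp ((1 + \<delta>\<^sup>2) / 2 * a\<^sup>2))"
proof -
  define e where "e = (N + p + 1) / m - 1"
  define k where "k = max 0 ((N + p + 1) / m - 1)"
  define M where "M = 4 * 2 powr \<bar>e\<bar> * exp (\<bar>e\<bar>\<^sup>2)"
  define C1 where "C1 = max (4 * exp 1) (exp (1/2) * M / m * max 1 \<delta> powr k)"
  have C1p: "C1 > 0" unfolding C1_def by (simp add: less_max_iff_disj)
  have N1: "N + 1 > 0" using N by simp
  define C where "C = C1 * (pi + 1/(N+1))"
  have Cp: "C > 0" using C1p N1 pi_gt_zero unfolding C_def by (intro mult_pos_pos add_pos_pos) auto
  show ?thesis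
  proof (intro exI[of _ C] conjI allI impI)
    show "C > 0" by (rule Cp)
    fix x a d :: real
    assume x: "x > 0" and a: "a > 0" and d0: "0 \<le> d" and dm: "d \<le> m"
    define L where "L = R / x\<^sup>2"
    have Lpos: "L > 0" using R x by (simp add: L_def)
    define K where "K = C1 * (1 + a) powr k * exp ((1 + \<delta>\<^sup>2) / 2 * a\<^sup>2)"
    have K0: "K > 0" using C1p a by (simp add: K_def)
    define f where "f = (\<lambda>r. x*(x*r) powr N/(1+(x*r) powr (N+1))\<^sup>2 + m*x*(x*r) powr (m-1)/(1+((x*r) powr m - a*\<delta>)\<^sup>2))"
    define F where "F = (\<lambda>r. -1/(N+1) * inverse (1+(x*r) powr (N+1)) + arctan ((x*r) powr m - a*\<delta>))"
    have fm: "f \<in> borel_measurable borel" unfolding f_def by measurable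
    have fd: "DERIV F r :> f r" if "L \<le> r" for r
    proof -
      have r: "r > 0" using that Lpos by simp
      show ?thesis unfolding F_def f_def
        by (intro DERIV_add dF1 dF2 x r N m)
    qed
    have fnn: "0 \<le> f r" if "L \<le> r" for r
    proof -
      have r: "r > 0" using that Lpos by simp
      show ?thesis unfolding f_def using x r m by (intro add_nonneg_nonneg divide_nonneg_nonneg mult_nonneg_nonneg) auto
    qed
    have lim: "(F \<longlongrightarrow> 0 + pi/2) at_top"
      unfolding F_def by (intro tendsto_add l1 l2 x m N1)
    have gle: "x powr (N + 1 - p) * (exp (- (x powr (2*m) / 2) * (1 + r powr (2*m)) + a * x powr d * (1 + \<delta> * r powr d)) * r powr N) \<le> K * f r"
      if "L \<le> r" for r
    proof -
      have "r \<ge> R / x\<^sup>2" using that by (simp add: L_def)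
      show ?thesis unfolding K_def f_def C1_def M_def e_def k_def
        by (rule PW1[OF m \<delta> R N p x a d0 dm \<open>r \<ge> R / x\<^sup>2\<close>])
    qed
    have bound: "ennreal (x powr (N + 1 - p)) *
       (\<integral>\<^sup>+ r\<in>{L..}. ennreal (exp (- (x powr (2*m) / 2) * (1 + r powr (2*m)) + a * x powr d * (1 + \<delta> * r powr d)) * r powr N) \<partial>lborel)
       \<le> ennreal K * ennreal (0 + pi/2 - F L)"
      by (rule tool[OF fm fd fnn lim gle]) (use x K0 in auto)
    have FL: "F L \<ge> -1/(N+1) - pi/2"
      unfolding F_def using FLtest[OF x Lpos N1, of m a \<delta>] by simp
    have "0 + pi/2 - F L \<le> pi + 1/(N+1)" using FL by linarith
    then have "ennreal K * ennreal (0 + pi/2 - F L) \<le> ennreal K * ennreal (pi + 1/(N+1))"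
      by (intro mult_left_mono ennreal_leI) auto
    also have "\<dots> = ennreal (K * (pi + 1/(N+1)))"
      using K0 N1 pi_gt_zero by (subst ennreal_mult) auto
    also have "K * (pi + 1/(N+1)) = C * (1 + a) powr (max 0 ((N + p + 1) / m - 1)) * exp ((1 + \<delta>\<^sup>2) / 2 * a\<^sup>2)"
      unfolding K_def C_def k_def by (simp only: mult_ac)
    finally show "ennreal (x powr (N + 1 - p)) *
       (\<integral>\<^sup>+ r\<in>{R / x\<^sup>2..}.
          ennreal (exp (- (x powr (2*m) / 2) * (1 + r powr (2*m)) + a * x powr d * (1 + \<delta> * r powr d))
                   * r powr N) \<partial>lborel)
       \<le> ennreal (C * (1 + a) powr (max 0 ((N + p + 1) / m - 1)) * exp ((1 + \<delta>\<^sup>2) / 2 * a\<^sup>2))"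
      using bound unfolding L_def by (rule order_trans[rotated])
  qed
qed

lemma G1: fixes y :: real shows "exp (-(y\<^sup>2)/4) \<le> 4/(1+y\<^sup>2)"
proof -
  have h: "1 + y\<^sup>2/4 \<le> exp (y\<^sup>2/4)" by (rule exp_ge_add_one_self)
  have "0 \<le> y\<^sup>2" by simp
  then have "1 + y\<^sup>2 \<le> 4 * exp (y\<^sup>2/4)" using h by linarith
  then have "exp (-(y\<^sup>2)/4) * (1 + y\<^sup>2) \<le> exp (-(y\<^sup>2)/4) * (4 * exp (y\<^sup>2/4))"
    by (intro mult_left_mono) auto
  also have "\<dots> = 4" by (simp add: exp_minus field_simps)
  finally show ?thesis by (simp add: field_simps add_pos_nonneg)
qed

lemma G1': fixes y :: real shows "exp (-(y\<^sup>2)/2) \<le> 4/(1+y\<^sup>2)"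
proof -
  have "exp (-(y\<^sup>2)/2) \<le> exp (-(y\<^sup>2)/4)" by simp
  then show ?thesis using G1[of y] by linarith
qed

lemma G3:
  fixes X v a :: real assumes X: "X \<ge> 0" and a: "a > 0" and v: "v \<ge> X/2"
  shows "X * exp (-((v - a)\<^sup>2)/2) \<le> 4*a + 8"
proof (cases "X \<le> 4*a")
  case True
  have "X * exp (-((v - a)\<^sup>2)/2) \<le> X * 1" using X by (intro mult_left_mono) auto
  then show ?thesis using True by linarith
next
  case False
  have "v - a \<ge> X/4" using v False by linarith
  moreover have "X/4 \<ge> 0" using X by simp
  ultimately have "(X/4)\<^sup>2 \<le> (v - a)\<^sup>2" by (intro power_mono) auto
  then have "exp (-((v - a)\<^sup>2)/2) \<le> exp (-(X\<^sup>2)/32)" by (simp add: power_divide)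
  then have "X * exp (-((v - a)\<^sup>2)/2) \<le> X * exp (-(X\<^sup>2)/32)" using X by (intro mult_left_mono) auto
  also have "\<dots> \<le> 8"
  proof -
    have h: "1 + X\<^sup>2/32 \<le> exp (X\<^sup>2/32)" by (rule exp_ge_add_one_self)
    have "0 \<le> (X - 16)\<^sup>2" by simp
    then have "X \<le> 8 + X\<^sup>2/32" by (simp add: power2_eq_square algebra_simps)
    also have "\<dots> \<le> 8 * exp (X\<^sup>2/32)" using h zero_le_power2[of X] by linarith
    finally have "X * exp (-(X\<^sup>2)/32) \<le> 8 * exp (X\<^sup>2/32) * exp (-(X\<^sup>2)/32)"
      by (intro mult_right_mono) auto
    also have "\<dots> = 8" by (simp add: exp_minus field_simps)
    finally show ?thesis .
  qed
  finally show ?thesis using a by linarith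
qed

lemma G2:
  fixes m R x r :: real
  assumes m: "m > 0" and R: "R \<ge> 1" and x: "x > 0" and r1: "r \<ge> 1" and rR: "r \<ge> R / x\<^sup>2"
  shows "r * exp (-((x powr m * (r powr m - 1))\<^sup>2)/4) \<le> max (2 powr (1/m)) ((max (2/m) 1 / (1/16)) powr (2/m) * exp (1/64))"
proof (cases "r powr m \<le> 2")
  case True
  have "r = (r powr m) powr (1/m)" using r1 m by (simp add: powr_powr)
  also have "\<dots> \<le> 2 powr (1/m)" using True m by (intro powr_mono2) auto
  finally have "r \<le> 2 powr (1/m)" .
  moreover have "r * exp (-((x powr m * (r powr m - 1))\<^sup>2)/4) \<le> r * 1" using r1 by (intro mult_left_mono) auto
  ultimately show ?thesis by (smt (verit) max.cobounded1)
next
  case False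
  define X where "X = x powr m"
  define w where "w = X * r powr m"
  have X0: "X > 0" using x by (simp add: X_def)
  have rpos: "r > 0" using r1 by simp
  have hw: "w \<ge> r powr (m/2)"
  proof (cases "x \<ge> 1")
    case True
    have "1 \<le> X" unfolding X_def using True m by (intro ge_one_powr_ge_zero) auto
    have "r powr (m/2) \<le> r powr m" using r1 m by (intro powr_mono) auto
    also have "\<dots> \<le> X * r powr m" using \<open>1 \<le> X\<close> by (simp add: mult_le_cancel_right1)
    finally show ?thesis by (simp add: w_def)
  next
    case False
    have "R \<le> x\<^sup>2 * r" using rR x by (simp add: field_simps)
    then have h1: "1 \<le> x*x*r" using R by (simp add: power2_eq_square)
    have "X * r powr (m/2) = (x*x*r) powr (m/2)"
    proof -
      have "x powr m = x powr (m/2) * x powr (m/2)" by (simp add: powr_add[symmetric])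
      then show ?thesis using x rpos by (simp add: X_def powr_mult)
    qed
    also have "\<dots> \<ge> 1" using h1 m by (intro ge_one_powr_ge_zero) auto
    finally have "1 \<le> X * r powr (m/2)" .
    then have "r powr (m/2) \<le> X * r powr (m/2) * r powr (m/2)" by (simp add: mult_le_cancel_right1)
    also have "\<dots> = w" by (simp add: w_def powr_add[symmetric] mult.assoc)
    finally show ?thesis .
  qed
  have w0: "w \<ge> 0" using X0 by (simp add: w_def)
  have hv: "X * (r powr m - 1) \<ge> w/2"
  proof -
    have "X * 2 \<le> X * r powr m" using False X0 by (intro mult_left_mono) auto
    then show ?thesis by (simp add: w_def algebra_simps)
  qed
  have hr: "r \<le> w powr (2/m)"
  proof -
    have "r = (r powr (m/2)) powr (2/m)" using m rpos by (simp add: powr_powr)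
    also have "\<dots> \<le> w powr (2/m)" using hw m by (intro powr_mono2) auto
    finally show ?thesis .
  qed
  have he: "exp (-((X * (r powr m - 1))\<^sup>2)/4) \<le> exp (-(w\<^sup>2)/16)"
  proof -
    have "(w/2)\<^sup>2 \<le> (X * (r powr m - 1))\<^sup>2" using hv w0 by (intro power_mono) auto
    then show ?thesis by (simp add: power_divide)
  qed
  define Cg where "Cg = (max (2/m) 1 / (1/16)) powr (2/m)"
  have E3i: "w powr (2/m) \<le> Cg * exp (1/16 * w)" unfolding Cg_def using E3[of "2/m" "1/16" w] m w0 by simp
  have q: "1/16 * w + -(w\<^sup>2)/16 \<le> 1/64"
  proof -
    have "0 \<le> (w - 1/2)\<^sup>2" by simp
    then show ?thesis by (simp add: power2_eq_square algebra_simps)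
  qed
  have Cg0: "Cg \<ge> 0" by (simp add: Cg_def)
  have "r * exp (-((x powr m * (r powr m - 1))\<^sup>2)/4) \<le> w powr (2/m) * exp (-(w\<^sup>2)/16)"
    unfolding X_def[symmetric] using hr he rpos by (intro mult_mono) auto
  also have "\<dots> \<le> Cg * exp (1/16 * w) * exp (-(w\<^sup>2)/16)" using E3i by (intro mult_right_mono) auto
  also have "\<dots> = Cg * exp (1/16 * w + -(w\<^sup>2)/16)" by (simp only: mult.assoc mult_exp_exp)
  also have "\<dots> \<le> Cg * exp (1/64)" using q Cg0 by (intro mult_left_mono) auto
  finally show ?thesis unfolding Cg_def by (smt (verit) max.cobounded2)
qed
lemma rpow_aux:
  fixes r m :: real assumes rpos: "r > 0" and m: "m > 2" and rm: "r powr m \<ge> 1/2"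
  shows "r powr (1 - m/2) \<le> 2"
proof -
  have m0: "m > 0" using m by simp
  have e0: "(m/2 - 1)/m \<ge> 0" using m by simp
  have e1: "(m/2 - 1)/m \<le> 1" using m0 by (simp add: divide_le_eq)
  have h1: "r powr (m/2 - 1) = (r powr m) powr ((m/2 - 1)/m)" using rpos m0 by (simp add: powr_powr)
  have h2: "(1/2) powr ((m/2 - 1)/m) \<le> (r powr m) powr ((m/2 - 1)/m)" using rm e0 by (intro powr_mono2) auto
  have h3: "(1/2::real) powr 1 \<le> (1/2) powr ((m/2 - 1)/m)" using e1 by (intro powr_mono') auto
  have y: "r powr (m/2 - 1) \<ge> 1/2" using h1 h2 h3 by simp
  have zy: "r powr (1 - m/2) * r powr (m/2 - 1) = 1"
  proof -
    have "(1 - m/2) + (m/2 - 1) = 0" by simp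
    then show ?thesis using rpos by (metis powr_add powr_zero_eq_one less_irrefl)
  qed
  have "r powr (1 - m/2) * 1 \<le> r powr (1 - m/2) * (2 * r powr (m/2 - 1))" using y by (intro mult_left_mono) auto
  also have "\<dots> = 2 * (r powr (1 - m/2) * r powr (m/2 - 1))" by (simp only: mult_ac)
  finally show ?thesis using zy by simp
qed

lemma PW2:
  fixes m R x a d r :: real
  assumes m: "m > 0" and R: "R \<ge> 1" and x: "x > 0" and a: "a > 0" and d0: "0 \<le> d" and dm: "d \<le> m"
    and rR: "r \<ge> R / x\<^sup>2"
  defines "Dm \<equiv> max (2 powr (1/m)) ((max (2/m) 1 / (1/16)) powr (2/m) * exp (1/64))"
  defines "C2 \<equiv> max (4*Dm/m) (max (8/m) 16)"
  shows "x powr m * (exp (- (x powr (2*m) / 2) * (1 - r powr m)\<^sup>2 + a * x powr d * (1 - r powr d)) * r powr (m / 2))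
    \<le> (C2 * (1 + a) * exp (a\<^sup>2 / 2)) *
       (m * x powr m * r powr (m-1) / (1 + (x powr m * (r powr m - 1))\<^sup>2)
        + m * x powr m * r powr (m-1) / (1 + (x powr m * (1 - r powr m) - a)\<^sup>2)
        + 1 / (1 + r\<^sup>2))"
proof -
  define X where "X = x powr m"
  define E where "E = - (x powr (2*m) / 2) * (1 - r powr m)\<^sup>2 + a * x powr d * (1 - r powr d)"
  define f3 where "f3 = m * X * r powr (m-1) / (1 + (X * (r powr m - 1))\<^sup>2)"
  define f4 where "f4 = m * X * r powr (m-1) / (1 + (X * (1 - r powr m) - a)\<^sup>2)"
  define f5 where "f5 = 1 / (1 + r\<^sup>2)"
  define Q where "Q = C2 * (1 + a) * exp (a\<^sup>2 / 2)"
  have rpos: "r > 0" using rR R x by (smt (verit) divide_pos_pos zero_less_power)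
  have X0: "X > 0" using x by (simp add: X_def)
  have X2: "x powr (2*m) = X\<^sup>2" using x by (simp add: X_def power2_eq_square powr_add[symmetric])
  have f3nn: "f3 \<ge> 0" using m X0 rpos by (simp add: f3_def)
  have f4nn: "f4 \<ge> 0" using m X0 rpos by (simp add: f4_def)
  have f5nn: "f5 \<ge> 0" by (simp add: f5_def add_pos_nonneg)
  have Dm0: "Dm \<ge> 0" by (simp add: Dm_def le_max_iff_disj)
  have C2a: "4*Dm/m \<le> C2" "8/m \<le> C2" "16 \<le> C2" by (auto simp: C2_def)
  have ea: "exp (a\<^sup>2/2) \<ge> 1" by simp
  have a1: "1 + a \<ge> 1" using a by simp
  have C2le: "c \<le> Q" if "c \<le> C2" "c \<ge> 0" for c
  proof -
    have "c * 1 * 1 \<le> C2 * (1 + a) * exp (a\<^sup>2 / 2)"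
      using that a1 ea by (intro mult_mono) auto
    then show ?thesis by (simp add: Q_def)
  qed
  have Q0: "Q \<ge> 0" using C2le[of 0] C2a(3) by simp
  have LHS: "x powr m * (exp E * r powr (m / 2)) = X * exp E * r powr (m/2)" by (simp add: X_def)
  have main: "X * exp E * r powr (m/2) \<le> Q * (f3 + f4 + f5)"
  proof (cases "r \<ge> 1")
    case True
    have "r powr d \<ge> 1" using True d0 by (intro ge_one_powr_ge_zero)
    then have "a * x powr d * (1 - r powr d) \<le> 0" using a x by (intro mult_nonneg_nonpos) auto
    moreover have "(x powr (2*m) / 2) * (1 - r powr m)\<^sup>2 = (X * (r powr m - 1))\<^sup>2 / 2"
      unfolding X2 by (simp add: power2_eq_square algebra_simps)
    ultimately have Eb: "E \<le> -((X * (r powr m - 1))\<^sup>2)/2" unfolding E_def by linarith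
    define v where "v = X * (r powr m - 1)"
    have rr: "r powr (m/2) \<le> r powr (m-1) * r"
    proof -
      have "r powr (m/2) \<le> r powr m" using True m by (intro powr_mono) auto
      also have "\<dots> = r powr ((m-1) + 1)" by simp
      also have "\<dots> = r powr (m-1) * r" using rpos by (simp only: powr_add powr_one_gt_zero_iff) simp
      finally show ?thesis .
    qed
    have D: "r * exp (-(v\<^sup>2)/4) \<le> Dm" unfolding v_def X_def Dm_def using G2[OF m R x True rR] .
    have ex: "exp (-(v\<^sup>2)/2) = exp (-(v\<^sup>2)/4) * exp (-(v\<^sup>2)/4)" by (simp add: mult_exp_exp)
    have "X * exp E * r powr (m/2) \<le> X * exp (-(v\<^sup>2)/2) * (r powr (m-1) * r)"
      using Eb X0 rr by (intro mult_mono) (auto simp: v_def)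
    also have "\<dots> = X * r powr (m-1) * (r * exp (-(v\<^sup>2)/4)) * exp (-(v\<^sup>2)/4)"
      unfolding ex by (simp only: mult_ac)
    also have "\<dots> \<le> X * r powr (m-1) * Dm * (4 / (1 + v\<^sup>2))"
      using D G1[of v] X0 rpos Dm0 by (intro mult_mono) auto
    also have "\<dots> = (4*Dm/m) * f3" using m by (simp add: f3_def v_def field_simps)
    also have "\<dots> \<le> Q * f3" using C2le[OF C2a(1)] m Dm0 f3nn by (intro mult_right_mono) auto
    also have "\<dots> \<le> Q * (f3 + f4 + f5)" using Q0 f4nn f5nn by (intro mult_left_mono) auto
    finally show ?thesis .
  next
    case False
    then have r1: "r < 1" by simp
    have x1: "x \<ge> 1"
    proof (rule ccontr)
      assume "\<not> x \<ge> 1"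
      then have "x\<^sup>2 < 1" using x by (simp add: power_less_one_iff abs_less_iff) 
      then have "R / x\<^sup>2 > R" using R x by (simp add: less_divide_eq)
      then show False using rR r1 R by linarith
    qed
    define v where "v = X * (1 - r powr m)"
    have xd: "x powr d \<le> X" unfolding X_def using x1 dm by (intro powr_mono) auto
    have rd: "r powr m \<le> r powr d" using r1 rpos dm by (intro powr_mono') auto
    have rd1: "r powr d \<le> 1" using r1 rpos d0 powr_mono2[of d r 1] by simp
    have "a * x powr d * (1 - r powr d) \<le> a * X * (1 - r powr m)"
      using xd rd rd1 a x X0 by (intro mult_mono) auto
    moreover have "(x powr (2*m) / 2) * (1 - r powr m)\<^sup>2 = v\<^sup>2 / 2"
      unfolding X2 by (simp add: v_def power2_eq_square algebra_simps)
    moreover have "-(v\<^sup>2)/2 + a * v = a\<^sup>2/2 - (v - a)\<^sup>2/2" by (simp add: power2_eq_square field_simps)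
    ultimately have Eb: "E \<le> a\<^sup>2/2 + -((v - a)\<^sup>2)/2" unfolding E_def v_def by (simp add: algebra_simps)
    have "X * exp E * r powr (m/2) \<le> X * (exp (a\<^sup>2/2) * exp (-((v - a)\<^sup>2)/2)) * r powr (m/2)"
      using Eb X0 by (intro mult_right_mono mult_left_mono) (auto simp: mult_exp_exp)
    also have "\<dots> = exp (a\<^sup>2/2) * (X * exp (-((v - a)\<^sup>2)/2) * r powr (m/2))" by (simp only: mult_ac)
    also have "\<dots> \<le> Q * (f3 + f4 + f5)"
    proof (cases "r powr m \<ge> 1/2")
      case True
      have rr: "r powr (m/2) \<le> 2 * r powr (m-1)"
      proof -
        have "r powr (1 - m/2) \<le> 2"
        proof (cases "1 - m/2 \<ge> 0")
          case True
          have "r powr (1 - m/2) \<le> 1 powr (1 - m/2)" by (rule powr_mono2) (use True r1 rpos in auto)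
          then show ?thesis by simp
        next
          case False
          then have "m > 2" by simp
          then show ?thesis using rpow_aux[OF rpos _ \<open>r powr m \<ge> 1/2\<close>] by simp
        qed
        then have "r powr (m-1) * r powr (1 - m/2) \<le> r powr (m-1) * 2" by (intro mult_left_mono) auto
        moreover have "r powr (m-1) * r powr (1 - m/2) = r powr (m/2)"
        proof -
          have "m - 1 + (1 - m/2) = m/2" by simp
          then show ?thesis by (metis powr_add)
        qed
        ultimately show ?thesis by simp
      qed
      have "X * exp (-((v - a)\<^sup>2)/2) * r powr (m/2) \<le> X * (4 / (1 + (v - a)\<^sup>2)) * (2 * r powr (m-1))"
        using G1'[of "v - a"] rr X0 by (intro mult_mono) auto
      also have "\<dots> = (8/m) * f4" using m by (simp add: f4_def v_def field_simps)
      finally have "exp (a\<^sup>2/2) * (X * exp (-((v - a)\<^sup>2)/2) * r powr (m/2)) \<le> exp (a\<^sup>2/2) * ((8/m) * f4)"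
        by (intro mult_left_mono) auto
      also have "\<dots> = (8/m) * exp (a\<^sup>2/2) * f4" by simp
      also have "\<dots> \<le> (C2 * (1 + a)) * exp (a\<^sup>2/2) * f4"
      proof -
        have "8/m * 1 \<le> C2 * (1 + a)" using C2a(2) a1 m by (intro mult_mono) (auto simp: C2_def)
        then show ?thesis using f4nn by (intro mult_right_mono) auto
      qed
      also have "\<dots> = Q * f4" by (simp add: Q_def)
      also have "\<dots> \<le> Q * (f3 + f4 + f5)" using Q0 f3nn f5nn by (intro mult_left_mono) auto
      finally show ?thesis .
    next
      case False
      have "X * (1/2) \<le> X * (1 - r powr m)" using False X0 by (intro mult_left_mono) auto
      then have vX: "v \<ge> X/2" unfolding v_def by simp
      have rm: "r powr (m/2) \<le> 1" using r1 rpos m powr_mono2[of "m/2" r 1] by simp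
      have "X * exp (-((v - a)\<^sup>2)/2) * r powr (m/2) \<le> (4*a + 8) * 1"
        using G3[OF less_imp_le[OF X0] a vX] rm a by (intro mult_mono) auto
      also have "\<dots> \<le> 8 * (1 + a)" using a by simp
      also have "\<dots> \<le> 16 * (1 + a) * f5"
      proof -
        have "r\<^sup>2 \<le> 1" using r1 rpos by (simp add: power_le_one)
        then have "f5 \<ge> 1/2" by (simp add: f5_def le_divide_eq add_pos_nonneg)
        then have "16*(1+a)*(1/2) \<le> 16*(1+a)*f5" using a by (intro mult_left_mono) auto
        then show ?thesis by simp
      qed
      finally have "exp (a\<^sup>2/2) * (X * exp (-((v - a)\<^sup>2)/2) * r powr (m/2)) \<le> exp (a\<^sup>2/2) * (16 * (1 + a) * f5)"
        by (intro mult_left_mono) auto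
      also have "\<dots> \<le> Q * f5"
      proof -
        have "16 * (1 + a) \<le> C2 * (1 + a)" using C2a(3) a by (intro mult_right_mono) auto
        then have "exp (a\<^sup>2/2) * (16 * (1 + a)) * f5 \<le> exp (a\<^sup>2/2) * (C2 * (1 + a)) * f5"
          by (rule mult_right_mono[OF mult_left_mono]) (use f5nn in auto)
        then show ?thesis by (simp add: Q_def mult_ac)
      qed
      also have "\<dots> \<le> Q * (f3 + f4 + f5)" using Q0 f3nn f4nn by (intro mult_left_mono) auto
      finally show ?thesis .
    qed
    finally show ?thesis .
  qed
  show ?thesis using main unfolding Q_def f3_def f4_def f5_def X_def E_def by (simp only: mult.assoc)
qed

lemma dF3: fixes X r m :: real assumes "r > 0" "m > 0"
  shows "DERIV (\<lambda>r. arctan (X * (r powr m - 1))) r :> m * X * r powr (m-1) / (1 + (X * (r powr m - 1))\<^sup>2)"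
  using assms by (auto intro!: derivative_eq_intros simp: field_simps)

lemma dF4: fixes X r m a :: real assumes "r > 0" "m > 0"
  shows "DERIV (\<lambda>r. - arctan (X * (1 - r powr m) - a)) r :> m * X * r powr (m-1) / (1 + (X * (1 - r powr m) - a)\<^sup>2)"
  using assms by (auto intro!: derivative_eq_intros simp: field_simps)

lemma dF5: fixes r :: real shows "DERIV arctan r :> 1 / (1 + r\<^sup>2)"
  using DERIV_arctan[of r] by (simp add: divide_inverse)

lemma l4: fixes X m :: real assumes "X > 0" "m > 0"
  shows "((\<lambda>r. arctan (X * (r powr m - 1))) \<longlongrightarrow> pi/2) at_top"
  using assms by real_asymp

lemma FL3: fixes A B C :: real assumes "A \<ge> -(pi/2)" "B \<ge> -(pi/2)"
  shows "A + B + arctan C \<ge> -(pi/2) + -(pi/2) + -(pi/2)"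
proof -
  have "- (pi/2) < arctan C" by (rule arctan_lbound)
  then show ?thesis using assms by linarith
qed

lemma INEQ2:
  fixes m R :: real
  assumes m: "m > 0" and R: "R \<ge> 1"
  shows "\<exists>C>0. \<forall>x a d :: real. x > 0 \<longrightarrow> a > 0 \<longrightarrow> 0 \<le> d \<longrightarrow> d \<le> m \<longrightarrow>
     ennreal (x powr m) *
       (\<integral>\<^sup>+ r\<in>{R / x\<^sup>2..}.
          ennreal (exp (- (x powr (2*m) / 2) * (1 - r powr m)\<^sup>2 + a * x powr d * (1 - r powr d))
                   * r powr (m / 2)) \<partial>lborel)
       \<le> ennreal (C * (1 + a) * exp (a\<^sup>2 / 2))"
proof -
  define Dm where "Dm = max (2 powr (1/m)) ((max (2/m) 1 / (1/16)) powr (2/m) * exp (1/64))"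
  define C2 where "C2 = max (4*Dm/m) (max (8/m) 16)"
  have C2p: "C2 > 0" unfolding C2_def by (simp add: less_max_iff_disj)
  define C where "C = C2 * (3 * pi)"
  have Cp: "C > 0" using C2p pi_gt_zero unfolding C_def by simp
  show ?thesis
  proof (intro exI[of _ C] conjI allI impI)
    show "C > 0" by (rule Cp)
    fix x a d :: real
    assume x: "x > 0" and a: "a > 0" and d0: "0 \<le> d" and dm: "d \<le> m"
    define L where "L = R / x\<^sup>2"
    have Lpos: "L > 0" using R x by (simp add: L_def)
    define X where "X = x powr m"
    have X0: "X > 0" using x by (simp add: X_def)
    define K where "K = C2 * (1 + a) * exp (a\<^sup>2 / 2)"
    have K0: "K > 0" using C2p a by (simp add: K_def)
    define f where "f = (\<lambda>r. m * X * r powr (m-1) / (1 + (X * (r powr m - 1))\<^sup>2)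
        + m * X * r powr (m-1) / (1 + (X * (1 - r powr m) - a)\<^sup>2) + 1 / (1 + r\<^sup>2))"
    define F where "F = (\<lambda>r. arctan (X * (r powr m - 1)) + - arctan (X * (1 - r powr m) - a) + arctan r)"
    have fm: "f \<in> borel_measurable borel" unfolding f_def by measurable
    have fd: "DERIV F r :> f r" if "L \<le> r" for r
    proof -
      have r: "r > 0" using that Lpos by simp
      show ?thesis unfolding F_def f_def
        by (intro DERIV_add dF3 dF4 dF5 r m)
    qed
    have fnn: "0 \<le> f r" if "L \<le> r" for r
    proof -
      have r: "r > 0" using that Lpos by simp
      show ?thesis unfolding f_def using X0 r m
        by (intro add_nonneg_nonneg divide_nonneg_nonneg mult_nonneg_nonneg) auto
    qed
    have lim: "(F \<longlongrightarrow> pi/2 + pi/2 + pi/2) at_top"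
      unfolding F_def by (intro tendsto_add l4 l3 X0 m tendsto_arctan_at_top)
    have gle: "x powr m * (exp (- (x powr (2*m) / 2) * (1 - r powr m)\<^sup>2 + a * x powr d * (1 - r powr d)) * r powr (m / 2)) \<le> K * f r"
      if "L \<le> r" for r
    proof -
      have "r \<ge> R / x\<^sup>2" using that by (simp add: L_def)
      show ?thesis unfolding K_def f_def X_def C2_def Dm_def
        by (rule PW2[OF m R x a d0 dm \<open>r \<ge> R / x\<^sup>2\<close>])
    qed
    have bound: "ennreal (x powr m) *
       (\<integral>\<^sup>+ r\<in>{L..}. ennreal (exp (- (x powr (2*m) / 2) * (1 - r powr m)\<^sup>2 + a * x powr d * (1 - r powr d)) * r powr (m / 2)) \<partial>lborel)
       \<le> ennreal K * ennreal (pi/2 + pi/2 + pi/2 - F L)"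
      by (rule tool[OF fm fd fnn lim gle]) (use x K0 in auto)
    have FL: "F L \<ge> -(pi/2) + -(pi/2) + -(pi/2)"
    proof -
      have "arctan (X * (L powr m - 1)) \<ge> -(pi/2)" using arctan_lbound less_imp_le by blast
      moreover have "- arctan (X * (1 - L powr m) - a) \<ge> -(pi/2)" using arctan_ubound less_imp_le by (smt (verit))
      ultimately show ?thesis unfolding F_def by (rule FL3)
    qed
    have "pi/2 + pi/2 + pi/2 - F L \<le> 3 * pi" using FL by linarith
    then have "ennreal K * ennreal (pi/2 + pi/2 + pi/2 - F L) \<le> ennreal K * ennreal (3 * pi)"
      by (intro mult_left_mono ennreal_leI) auto
    also have "\<dots> = ennreal (K * (3 * pi))"
      using K0 pi_gt_zero by (subst ennreal_mult) auto
    also have "K * (3 * pi) = C * (1 + a) * exp (a\<^sup>2 / 2)"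
      unfolding K_def C_def by (simp only: mult_ac)
    finally show "ennreal (x powr m) *
       (\<integral>\<^sup>+ r\<in>{R / x\<^sup>2..}.
          ennreal (exp (- (x powr (2*m) / 2) * (1 - r powr m)\<^sup>2 + a * x powr d * (1 - r powr d))
                   * r powr (m / 2)) \<partial>lborel)
       \<le> ennreal (C * (1 + a) * exp (a\<^sup>2 / 2))"
      using bound unfolding L_def by (rule order_trans[rotated])
  qed
qed

theorem lemma4:
  fixes m \<delta> R N p :: real
  assumes "m > 0" and "\<delta> > 0" and "R \<ge> 1" and "N > -1" and "p \<ge> 0"
  shows "\<exists>C>0. \<forall>x a d :: real. x > 0 \<longrightarrow> a > 0 \<longrightarrow> 0 \<le> d \<longrightarrow> d \<le> m \<longrightarrow>
     ennreal (x powr (N + 1 - p)) *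
       (\<integral>\<^sup>+ r\<in>{R / x\<^sup>2..}.
          ennreal (exp (- (x powr (2*m) / 2) * (1 + r powr (2*m)) + a * x powr d * (1 + \<delta> * r powr d))
                   * r powr N) \<partial>lborel)
       \<le> ennreal (C * (1 + a) powr (max 0 ((N + p + 1) / m - 1)) * exp ((1 + \<delta>\<^sup>2) / 2 * a\<^sup>2))
   \<and> ennreal (x powr m) *
       (\<integral>\<^sup>+ r\<in>{R / x\<^sup>2..}.
          ennreal (exp (- (x powr (2*m) / 2) * (1 - r powr m)\<^sup>2 + a * x powr d * (1 - r powr d))
                   * r powr (m / 2)) \<partial>lborel)
       \<le> ennreal (C * (1 + a) * exp (a\<^sup>2 / 2))"
proof -
  obtain C1 where C1: "C1 > 0" and H1: "\<forall>x a d :: real. x > 0 \<longrightarrow> a > 0 \<longrightarrow> 0 \<le> d \<longrightarrow> d \<le> m \<longrightarrow>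
     ennreal (x powr (N + 1 - p)) *
       (\<integral>\<^sup>+ r\<in>{R / x\<^sup>2..}.
          ennreal (exp (- (x powr (2*m) / 2) * (1 + r powr (2*m)) + a * x powr d * (1 + \<delta> * r powr d))
                   * r powr N) \<partial>lborel)
       \<le> ennreal (C1 * (1 + a) powr (max 0 ((N + p + 1) / m - 1)) * exp ((1 + \<delta>\<^sup>2) / 2 * a\<^sup>2))"
    using INEQ1[OF assms] by blast
  obtain C2 where C2: "C2 > 0" and H2: "\<forall>x a d :: real. x > 0 \<longrightarrow> a > 0 \<longrightarrow> 0 \<le> d \<longrightarrow> d \<le> m \<longrightarrow>
     ennreal (x powr m) *
       (\<integral>\<^sup>+ r\<in>{R / x\<^sup>2..}.
          ennreal (exp (- (x powr (2*m) / 2) * (1 - r powr m)\<^sup>2 + a * x powr d * (1 - r powr d))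
                   * r powr (m / 2)) \<partial>lborel)
       \<le> ennreal (C2 * (1 + a) * exp (a\<^sup>2 / 2))"
    using INEQ2[OF assms(1) assms(3)] by blast
  show ?thesis
  proof (intro exI[of _ "max C1 C2"] conjI allI impI)
    show "max C1 C2 > 0" using C1 by simp
    fix x a d :: real
    assume x: "x > 0" and a: "a > 0" and d0: "0 \<le> d" and dm: "d \<le> m"
    have "C1 * ((1 + a) powr (max 0 ((N + p + 1) / m - 1)) * exp ((1 + \<delta>\<^sup>2) / 2 * a\<^sup>2))
        \<le> max C1 C2 * ((1 + a) powr (max 0 ((N + p + 1) / m - 1)) * exp ((1 + \<delta>\<^sup>2) / 2 * a\<^sup>2))"
      by (intro mult_right_mono) auto
    then have "ennreal (C1 * (1 + a) powr (max 0 ((N + p + 1) / m - 1)) * exp ((1 + \<delta>\<^sup>2) / 2 * a\<^sup>2))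
        \<le> ennreal (max C1 C2 * (1 + a) powr (max 0 ((N + p + 1) / m - 1)) * exp ((1 + \<delta>\<^sup>2) / 2 * a\<^sup>2))"
      by (intro ennreal_leI) (simp add: mult.assoc)
    with H1 x a d0 dm show "ennreal (x powr (N + 1 - p)) *
       (\<integral>\<^sup>+ r\<in>{R / x\<^sup>2..}.
          ennreal (exp (- (x powr (2*m) / 2) * (1 + r powr (2*m)) + a * x powr d * (1 + \<delta> * r powr d))
                   * r powr N) \<partial>lborel)
       \<le> ennreal (max C1 C2 * (1 + a) powr (max 0 ((N + p + 1) / m - 1)) * exp ((1 + \<delta>\<^sup>2) / 2 * a\<^sup>2))"
      by (meson order_trans)
    have "C2 * ((1 + a) * exp (a\<^sup>2 / 2)) \<le> max C1 C2 * ((1 + a) * exp (a\<^sup>2 / 2))"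
      using a by (intro mult_right_mono) auto
    then have "ennreal (C2 * (1 + a) * exp (a\<^sup>2 / 2)) \<le> ennreal (max C1 C2 * (1 + a) * exp (a\<^sup>2 / 2))"
      by (intro ennreal_leI) (simp add: mult.assoc)
    with H2 x a d0 dm show "ennreal (x powr m) *
       (\<integral>\<^sup>+ r\<in>{R / x\<^sup>2..}.
          ennreal (exp (- (x powr (2*m) / 2) * (1 - r powr m)\<^sup>2 + a * x powr d * (1 - r powr d))
                   * r powr (m / 2)) \<partial>lborel)
       \<le> ennreal (max C1 C2 * (1 + a) * exp (a\<^sup>2 / 2))"
      by (meson order_trans)
  qed
qed

end
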